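(* Let $\frac12<\beta<\frac54$ and $\alpha+\beta=\frac54$, and let $r>\max(2\beta,\beta+1)$. Then there exists a constant $C>0$ such that for all $v\in V^{r-1}$, $\theta\in H^{r-\beta}$, $\phi\in H^{r-\beta-1}$, \[ |\langle\Lambda^{-2\alpha}v\cdot\nabla\theta,\Lambda^{2r-2\beta-2}\phi\rangle|\le C\|v\|_{V^{r-1}}\|\theta\|_{H^{r-\beta}}\|\phi\|_{H^{r-\beta-1}}. \]
   Context: On the torus $\mathbb T=[0,2\pi]^3$, for $s\in\mathbb R$, $H^s$ is the space of real periodic functions/distributions $f=\sum_{k\in\mathbb Z^3\setminus\{0\}}f_ke^{ik\cdot x}$ (zero mean) with $f_{-k}=\overline{f_k}$ and $\|f\|_{H^s}^2=\sum_k|f_k|^2|k|^{2s}<\infty$; $V^s$ is the analogous space of vector fields $w=\sum_{k\neq0}w_ke^{ik\cdot x}$, $w_k\in\mathbb C^3$, $w_{-k}=\overline{w_k}$, $w_k\cdot k=0$ (divergence free, zero mean), with $\|w\|_{V^s}^2=\sum_k|w_k|^2|k|^{2s}$. $\Lambda^s$ is the Fourier multiplier by $|k|^s$. $\langle\cdot,\cdot\rangle$ is the $L^2(\mathbb T)$ scalar product (duality pairing). *)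

theory Defs
  imports "HOL-Analysis.Analysis"
begin

text \<open>Fourier-side model of the 3-torus [0,2pi]^3.  Frequencies are k :: int^3.
 A scalar periodic function/distribution is represented by its Fourier coefficients
 f :: int^3 => complex (f = sum_k f k e^{i k.x}); a vector field by coefficients
 w :: int^3 => complex^3.\<close>

definition knorm :: "int^3 \<Rightarrow> real" where
  "knorm k = sqrt (\<Sum>i\<in>UNIV. (real_of_int (k $ i))\<^sup>2)"

definition Hs :: "real \<Rightarrow> (int^3 \<Rightarrow> complex) \<Rightarrow> bool" where
  "Hs s f \<longleftrightarrow> f 0 = 0 \<and> (\<forall>k. f (- k) = cnj (f k)) \<and>
     (\<lambda>k. (cmod (f k))\<^sup>2 * knorm k powr (2 * s)) summable_on UNIV"

definition Hnorm :: "real \<Rightarrow> (int^3 \<Rightarrow> complex) \<Rightarrow> real" where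
  "Hnorm s f = sqrt (\<Sum>\<^sub>\<infinity>k. (cmod (f k))\<^sup>2 * knorm k powr (2 * s))"

definition Vs :: "real \<Rightarrow> (int^3 \<Rightarrow> complex^3) \<Rightarrow> bool" where
  "Vs s w \<longleftrightarrow> w 0 = 0 \<and> (\<forall>k. w (- k) = (\<chi> i. cnj (w k $ i))) \<and>
     (\<forall>k. (\<Sum>i\<in>UNIV. w k $ i * of_int (k $ i)) = 0) \<and>
     (\<lambda>k. (norm (w k))\<^sup>2 * knorm k powr (2 * s)) summable_on UNIV"

definition Vnorm :: "real \<Rightarrow> (int^3 \<Rightarrow> complex^3) \<Rightarrow> real" where
  "Vnorm s w = sqrt (\<Sum>\<^sub>\<infinity>k. (norm (w k))\<^sup>2 * knorm k powr (2 * s))"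

definition Lambda :: "real \<Rightarrow> (int^3 \<Rightarrow> complex) \<Rightarrow> (int^3 \<Rightarrow> complex)" where
  "Lambda s f = (\<lambda>k. complex_of_real (knorm k powr s) * f k)"

definition LambdaV :: "real \<Rightarrow> (int^3 \<Rightarrow> complex^3) \<Rightarrow> (int^3 \<Rightarrow> complex^3)" where
  "LambdaV s w = (\<lambda>k. (knorm k powr s) *\<^sub>R w k)"

definition grad :: "(int^3 \<Rightarrow> complex) \<Rightarrow> (int^3 \<Rightarrow> complex^3)" where
  "grad f = (\<lambda>k. \<chi> i. \<i> * of_int (k $ i) * f k)"

definition dotgrad :: "(int^3 \<Rightarrow> complex^3) \<Rightarrow> (int^3 \<Rightarrow> complex) \<Rightarrow> (int^3 \<Rightarrow> complex)" where
  "dotgrad v f = (\<lambda>k. \<Sum>\<^sub>\<infinity>j. (\<Sum>i\<in>UNIV. v j $ i * grad f (k - j) $ i))"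

text \<open>L^2(T) pairing of real functions via Parseval:
 <f,g> = (2 pi)^3 sum_k f_k conj(g_k).\<close>
definition l2pair :: "(int^3 \<Rightarrow> complex) \<Rightarrow> (int^3 \<Rightarrow> complex) \<Rightarrow> complex" where
  "l2pair f g = complex_of_real ((2 * pi) ^ 3) * (\<Sum>\<^sub>\<infinity>k. f k * cnj (g k))"

end

theory Submission
  imports Defs
begin

lemma powr_step:
  fixes x c :: real
  assumes x: "1 \<le> x" and c: "c \<noteq> 0" "c \<le> 1"
  shows "(x+1) powr (c - 1) \<le> ((x+1) powr c - x powr c) / c"
proof -
  have d: "\<And>y. x \<le> y \<Longrightarrow> y \<le> x+1 \<Longrightarrow> ((\<lambda>z. z powr c) has_real_derivative c * y powr (c-1)) (at y)"
    using x by (intro has_real_derivative_powr) auto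
  obtain z where z: "x < z" "z < x+1" "(x+1) powr c - x powr c = ((x+1) - x) * (c * z powr (c-1))"
    using MVT2[of x "x+1" "\<lambda>z. z powr c" "\<lambda>z. c * z powr (c-1)", OF _ d] by auto
  have "(x+1) powr (c-1) \<le> z powr (c-1)"
    using z x c by (intro powr_mono2') auto
  also have "z powr (c-1) = ((x+1) powr c - x powr c) / c" using z c by simp
  finally show ?thesis .
qed

lemma sum1d:
  fixes t :: real
  assumes "0 \<le> t" "t \<noteq> 1" "1 \<le> N"
  shows "(\<Sum>m\<in>{1..N}. real m powr (-t)) \<le> 1 + (real N powr (1-t) - 1)/(1-t)"
  using assms(3)
proof (induction N rule: dec_induct)
  case base then show ?case by simp
next
  case (step n)
  have "real (Suc n) powr (-t) \<le> (real (Suc n) powr (1-t) - real n powr (1-t))/(1-t)"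
    using powr_step[of "real n" "1-t"] step assms by (simp add: add.commute)
  then show ?case using step by (simp add: diff_divide_distrib)
qed

definition gg :: "real \<Rightarrow> int \<Rightarrow> real" where
  "gg t n = (max 1 \<bar>real_of_int n\<bar>) powr (-t)"

lemma gg_nonneg: "0 \<le> gg t n" by (simp add: gg_def)

lemma gg_sym: "(\<Sum>n\<in>{-int N..int N}. gg t n) \<le> 2 * (\<Sum>m\<in>{0..N}. gg t (int m))"
proof -
  let ?A = "int ` {0..N}" and ?B = "(\<lambda>m. - int m) ` {0..N}"
  have sub: "{-int N..int N} \<subseteq> ?A \<union> ?B"
  proof
    fix n assume n: "n \<in> {-int N..int N}"
    show "n \<in> ?A \<union> ?B"
    proof (cases "n \<ge> 0")
      case True then have "n = int (nat n)" "nat n \<in> {0..N}" using n by auto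
      then show ?thesis by blast
    next
      case False then have "n = - int (nat (-n))" "nat (-n) \<in> {0..N}" using n by auto
      then show ?thesis by blast
    qed
  qed
  have "(\<Sum>n\<in>{-int N..int N}. gg t n) \<le> (\<Sum>n\<in>?A \<union> ?B. gg t n)"
    by (rule sum_mono2) (use sub gg_nonneg in auto)
  also have "\<dots> \<le> (\<Sum>n\<in>?A. gg t n) + (\<Sum>n\<in>?B. gg t n)"
    by (subst sum_Un) (auto intro!: sum_nonneg gg_nonneg)
  also have "(\<Sum>n\<in>?A. gg t n) = (\<Sum>m\<in>{0..N}. gg t (int m))"
    by (subst sum.reindex) (auto simp: inj_on_def)
  also have "(\<Sum>n\<in>?B. gg t n) = (\<Sum>m\<in>{0..N}. gg t (int m))"
    by (subst sum.reindex) (auto simp: inj_on_def gg_def)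
  finally show ?thesis by simp
qed

lemma gg_half: "(\<Sum>m\<in>{0..N}. gg t (int m)) = 1 + (\<Sum>m\<in>{1..N}. real m powr (-t))"
proof -
  have "(\<Sum>m\<in>{0..N}. gg t (int m)) = gg t 0 + (\<Sum>m\<in>{Suc 0..N}. gg t (int m))"
  proof -
    have "{0..N} = insert 0 {Suc 0..N}" by auto
    then show ?thesis by simp
  qed
  also have "(\<Sum>m\<in>{Suc 0..N}. gg t (int m)) = (\<Sum>m\<in>{1..N}. real m powr (-t))"
    by (rule sum.cong) (auto simp: gg_def max_def)
  finally show ?thesis by (simp add: gg_def)
qed

lemma oneD_big:
  assumes "t > 1"
  shows "(\<Sum>n\<in>{-int N..int N}. gg t n) \<le> 2 * (2 + 1/(t-1))"
proof -
  have "(\<Sum>m\<in>{1..N}. real m powr (-t)) \<le> 1 + 1/(t-1)"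
  proof (cases "N = 0")
    case True then show ?thesis using assms by simp
  next
    case False
    then have "(\<Sum>m\<in>{1..N}. real m powr (-t)) \<le> 1 + (real N powr (1-t) - 1)/(1-t)"
      using assms by (intro sum1d) auto
    also have "(real N powr (1-t) - 1)/(1-t) = (1 - real N powr (1-t))/(t-1)"
      using assms by (simp add: field_simps)
    also have "\<dots> \<le> 1/(t-1)" using assms by (intro divide_right_mono) auto
    finally show ?thesis by simp
  qed
  then show ?thesis using gg_sym[where t=t and N=N] gg_half[where t=t and N=N] by (smt (verit))
qed

lemma oneD_small:
  assumes "0 \<le> t" "t < 1" "1 \<le> N"
  shows "(\<Sum>n\<in>{-int N..int N}. gg t n) \<le> 2 * (2 + 1/(1-t)) * real N powr (1-t)"
proof -
  have p1: "1 \<le> real N powr (1-t)" using assms by (intro ge_one_powr_ge_zero) auto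
  have "(\<Sum>m\<in>{1..N}. real m powr (-t)) \<le> 1 + (real N powr (1-t) - 1)/(1-t)"
    using assms by (intro sum1d) auto
  also have "\<dots> \<le> real N powr (1-t) + real N powr (1-t)/(1-t)"
  proof -
    have "(real N powr (1-t) - 1)/(1-t) \<le> real N powr (1-t)/(1-t)"
      using assms by (intro divide_right_mono) auto
    then show ?thesis using p1 by linarith
  qed
  finally have "1 + (\<Sum>m\<in>{1..N}. real m powr (-t)) \<le> (2 + 1/(1-t)) * real N powr (1-t)"
    using p1 by (simp add: field_simps)
  then show ?thesis using gg_sym[where t=t and N=N] gg_half[where t=t and N=N] by linarith
qed

lemma prod_3: "prod f (UNIV::3 set) = f 1 * f 2 * f 3"
  unfolding UNIV_3 by (simp add: ac_simps)

lemma box_sum: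
  fixes A :: "(int^3) set"
  assumes "finite A" "\<And>l i. l \<in> A \<Longrightarrow> \<bar>l$i\<bar> \<le> int N"
  shows "(\<Sum>l\<in>A. \<Prod>i\<in>UNIV. gg t (l$i)) \<le> (\<Sum>n\<in>{-int N..int N}. gg t n)^3"
proof -
  let ?I = "{-int N..int N}"
  let ?h = "\<lambda>l::int^3. (l$1, l$2, l$3)"
  let ?G = "\<lambda>(a,b,c). gg t a * gg t b * gg t c"
  have inj: "inj_on ?h A"
    by (auto simp: inj_on_def vec_eq_iff forall_3)
  have "(\<Sum>l\<in>A. \<Prod>i\<in>UNIV. gg t (l$i)) = (\<Sum>l\<in>A. ?G (?h l))"
    by (simp add: prod_3)
  also have "\<dots> = sum ?G (?h ` A)"
    by (subst sum.reindex[OF inj]) simp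
  also have "\<dots> \<le> sum ?G (?I \<times> ?I \<times> ?I)"
  proof (rule sum_mono2)
    have bnd: "\<And>l i. l \<in> A \<Longrightarrow> l$i \<in> ?I" using assms(2) by (metis abs_le_D1 abs_le_D2 atLeastAtMost_iff minus_le_iff)
    show "?h ` A \<subseteq> ?I \<times> ?I \<times> ?I" using bnd by blast
  qed (auto simp: gg_nonneg)
  also have "\<dots> = (\<Sum>a\<in>?I. \<Sum>b\<in>?I. \<Sum>c\<in>?I. gg t a * gg t b * gg t c)"
    by (simp add: sum.cartesian_product)
  also have "\<dots> = (\<Sum>n\<in>?I. gg t n)^3"
    by (simp add: power3_eq_cube sum_distrib_left sum_distrib_right mult_ac)
  finally show ?thesis .
qed

definition rv :: "int^3 \<Rightarrow> real^3" where "rv l = (\<chi> i. real_of_int (l$i))"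

lemma knorm_rv: "knorm l = norm (rv l)"
  by (simp add: knorm_def norm_vec_def L2_set_def rv_def)

lemma knorm_nonneg: "0 \<le> knorm l" by (simp add: knorm_rv)

lemma knorm_not_neg[simp]: "\<not> knorm l < 0" by (simp add: knorm_rv)

lemma knorm_zero[simp]: "knorm 0 = 0" by (simp add: knorm_rv rv_def vec_eq_iff)

lemma knorm_triangle: "knorm (j + l) \<le> knorm j + knorm l"
proof -
  have "rv (j + l) = rv j + rv l" by (simp add: rv_def vec_eq_iff)
  then show ?thesis by (simp add: knorm_rv norm_triangle_ineq)
qed

lemma knorm_minus: "knorm (- l) = knorm l"
proof -
  have "rv (- l) = - rv l" by (simp add: rv_def vec_eq_iff)
  then show ?thesis by (simp add: knorm_rv)
qed

lemma knorm_comp: "\<bar>real_of_int (l$i)\<bar> \<le> knorm l"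
  using component_le_norm_cart[of "rv l" i] by (simp add: knorm_rv rv_def)

lemma knorm_ge1: assumes "l \<noteq> 0" shows "1 \<le> knorm l"
proof -
  obtain i where "l$i \<noteq> 0" using assms by (auto simp: vec_eq_iff)
  then have "1 \<le> \<bar>real_of_int (l$i)\<bar>" by linarith
  then show ?thesis using knorm_comp[of l i] by linarith
qed

lemma knorm_pos: "l \<noteq> 0 \<Longrightarrow> 0 < knorm l" using knorm_ge1 by fastforce

lemma knorm_prod:
  assumes "l \<noteq> 0" "0 \<le> q"
  shows "knorm l powr (-(2*q)) \<le> (\<Prod>i\<in>UNIV. gg (2*q/3) (l$i))"
proof -
  let ?t = "2*q/3"
  have c: "knorm l powr (-?t) \<le> gg ?t (l$i)" for i
    unfolding gg_def using assms knorm_comp[of l i] knorm_ge1[OF assms(1)]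
    by (intro powr_mono2') auto
  have nn: "0 \<le> knorm l powr (-?t)" by simp
  have "knorm l powr (-(2*q)) = knorm l powr (-?t) * knorm l powr (-?t) * knorm l powr (-?t)"
    by (simp add: powr_add[symmetric])
  also have "\<dots> \<le> gg ?t (l$1) * gg ?t (l$2) * gg ?t (l$3)"
    using c nn by (intro mult_mono) (auto simp: gg_nonneg)
  finally show ?thesis by (simp add: prod_3)
qed

lemma lattA:
  assumes "3 < 2*\<gamma>"
  shows "\<exists>Y. \<forall>A. finite A \<longrightarrow> (\<Sum>l\<in>A. if l \<noteq> 0 then knorm l powr (-(2*\<gamma>)) else 0) \<le> Y"
proof (intro exI allI impI)
  fix A :: "(int^3) set" assume A: "finite A"
  let ?t = "2*\<gamma>/3"
  define N where "N = (\<Sum>l\<in>A. \<Sum>i\<in>UNIV. nat \<bar>l$i\<bar>)"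
  have bnd: "\<bar>l$i\<bar> \<le> int N" if "l \<in> A" for l i
  proof -
    have "nat \<bar>l$i\<bar> \<le> (\<Sum>i\<in>UNIV. nat \<bar>l$i\<bar>)" by (rule member_le_sum) auto
    also have "\<dots> \<le> N" unfolding N_def using that A by (intro member_le_sum) auto
    finally show ?thesis by linarith
  qed
  have "(\<Sum>l\<in>A. if l \<noteq> 0 then knorm l powr (-(2*\<gamma>)) else 0) \<le> (\<Sum>l\<in>A. \<Prod>i\<in>UNIV. gg ?t (l$i))"
    using assms by (intro sum_mono) (auto intro!: knorm_prod prod_nonneg simp: gg_nonneg)
  also have "\<dots> \<le> (\<Sum>n\<in>{-int N..int N}. gg ?t n)^3"
    using A bnd by (intro box_sum) auto
  also have "\<dots> \<le> (2 * (2 + 1/(?t-1)))^3"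
    using assms by (intro power_mono oneD_big) (auto intro!: sum_nonneg simp: gg_nonneg)
  finally show "(\<Sum>l\<in>A. if l \<noteq> 0 then knorm l powr (-(2*\<gamma>)) else 0) \<le> (2 * (2 + 1/(?t-1)))^3" .
qed

lemma lattB:
  assumes "0 \<le> q" "q < 3/2"
  shows "\<exists>K. \<forall>R A. 1 \<le> R \<longrightarrow> finite A \<longrightarrow>
     (\<Sum>l\<in>A. if l \<noteq> 0 \<and> knorm l < R then knorm l powr (-(2*q)) else 0) \<le> K * R powr (3-2*q)"
proof (intro exI allI impI)
  fix R :: real and A :: "(int^3) set" assume R: "1 \<le> R" and A: "finite A"
  let ?t = "2*q/3"
  let ?K0 = "2 * (2 + 1/(1-?t))"
  define N where "N = nat \<lfloor>R\<rfloor>"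
  have N1: "1 \<le> N" using R by (simp add: N_def le_nat_iff le_floor_iff)
  have NR: "real N \<le> R" using R by (simp add: N_def)
  have iN: "int N = \<lfloor>R\<rfloor>" using R by (simp add: N_def)
  let ?A = "{l\<in>A. l \<noteq> 0 \<and> knorm l < R}"
  have bnd: "\<bar>l$i\<bar> \<le> int N" if "l \<in> ?A" for l i
  proof -
    have "real_of_int \<bar>l$i\<bar> \<le> R" using knorm_comp[of l i] that by auto
    then show ?thesis unfolding iN by (simp add: le_floor_iff)
  qed
  have "(\<Sum>l\<in>A. if l \<noteq> 0 \<and> knorm l < R then knorm l powr (-(2*q)) else 0)
      = (\<Sum>l\<in>?A. knorm l powr (-(2*q)))"
    using A by (simp add: sum.inter_filter)
  also have "\<dots> \<le> (\<Sum>l\<in>?A. \<Prod>i\<in>UNIV. gg ?t (l$i))"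
    using assms by (intro sum_mono knorm_prod) auto
  also have "\<dots> \<le> (\<Sum>n\<in>{-int N..int N}. gg ?t n)^3"
    using A bnd by (intro box_sum) auto
  also have "\<dots> \<le> (?K0 * real N powr (1-?t))^3"
    using assms N1 by (intro power_mono oneD_small) (auto intro!: sum_nonneg simp: gg_nonneg)
  also have "\<dots> = ?K0^3 * real N powr (3-2*q)"
  proof -
    have "(real N powr (1-?t))^3 = real N powr (real 3 * (1-?t))"
      using N1 by (subst powr_power) auto
    then show ?thesis by (simp only: power_mult_distrib) (simp add: algebra_simps)
  qed
  also have "\<dots> \<le> ?K0^3 * R powr (3-2*q)"
    using assms NR N1 by (intro mult_left_mono powr_mono2) auto
  finally show "(\<Sum>l\<in>A. if l \<noteq> 0 \<and> knorm l < R then knorm l powr (-(2*q)) else 0) \<le> ?K0^3 * R powr (3-2*q)" .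
qed

lemma fin_le_inf:
  fixes f :: "int^3 \<Rightarrow> real"
  assumes "(\<lambda>a. (f a)\<^sup>2) summable_on UNIV" "finite A"
  shows "(\<Sum>a\<in>A. (f a)\<^sup>2) \<le> (\<Sum>\<^sub>\<infinity>a. (f a)\<^sup>2)"
  using assms by (intro finite_sum_le_infsum) auto

lemma schur:
  fixes F G Hh :: "int^3 \<Rightarrow> real" and x y :: "int^3 \<Rightarrow> int^3 \<Rightarrow> real"
    and S :: "((int^3) \<times> (int^3)) set"
  assumes S: "finite S"
    and nF: "\<And>a. 0 \<le> F a" and nG: "\<And>a. 0 \<le> G a" and nH: "\<And>a. 0 \<le> Hh a"
    and nx: "\<And>a b. 0 \<le> x a b" and ny: "\<And>a b. 0 \<le> y a b"
    and sF: "(\<lambda>a. (F a)\<^sup>2) summable_on UNIV"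
    and sG: "(\<lambda>a. (G a)\<^sup>2) summable_on UNIV"
    and sH: "(\<lambda>a. (Hh a)\<^sup>2) summable_on UNIV"
    and X: "\<And>a b. x a b \<le> X"
    and Y: "\<And>b A. finite A \<Longrightarrow> (\<Sum>a\<in>A. (y a b)\<^sup>2) \<le> Y"
  shows "(\<Sum>(a,b)\<in>S. F a * G b * Hh (a+b) * x a b * y a b)
     \<le> X * sqrt Y * sqrt (\<Sum>\<^sub>\<infinity>a. (F a)\<^sup>2) * sqrt (\<Sum>\<^sub>\<infinity>a. (G a)\<^sup>2) * sqrt (\<Sum>\<^sub>\<infinity>a. (Hh a)\<^sup>2)"
proof -
  define u where "u = (\<lambda>(a,b). F a * Hh (a+b) * x a b)"
  define w where "w = (\<lambda>(a,b). G b * y a b)"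
  define IF where "IF = (\<Sum>\<^sub>\<infinity>a. (F a)\<^sup>2)"
  define IG where "IG = (\<Sum>\<^sub>\<infinity>a. (G a)\<^sup>2)"
  define IH where "IH = (\<Sum>\<^sub>\<infinity>a. (Hh a)\<^sup>2)"
  have X0: "0 \<le> X" using nx X by (meson order.trans)
  have Y0: "0 \<le> Y" using Y[of "{}"] by simp
  have IF0: "0 \<le> IF" unfolding IF_def by (intro infsum_nonneg) auto
  have IG0: "0 \<le> IG" unfolding IG_def by (intro infsum_nonneg) auto
  have IH0: "0 \<le> IH" unfolding IH_def by (intro infsum_nonneg) auto
  have un: "0 \<le> u p" for p unfolding u_def using nF nH nx by (auto split: prod.splits)
  have wn: "0 \<le> w p" for p unfolding w_def using nG ny by (auto split: prod.splits)
  have "(\<Sum>(a,b)\<in>S. F a * G b * Hh (a+b) * x a b * y a b) = (\<Sum>p\<in>S. \<bar>u p\<bar> * \<bar>w p\<bar>)"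
    using un wn by (intro sum.cong) (auto simp: u_def w_def)
  also have "\<dots> \<le> L2_set u S * L2_set w S" by (rule L2_set_mult_ineq)
  finally have h1: "(\<Sum>(a,b)\<in>S. F a * G b * Hh (a+b) * x a b * y a b) \<le> L2_set u S * L2_set w S" .
  have hu: "L2_set u S \<le> sqrt (X\<^sup>2 * (IF * IH))"
  proof -
    let ?m = "\<lambda>(a,b). (a, a+b)"
    have inj: "inj_on ?m S" by (auto simp: inj_on_def)
    have "(\<Sum>p\<in>S. (u p)\<^sup>2) \<le> (\<Sum>p\<in>S. X\<^sup>2 * ((\<lambda>(a,c). (F a)\<^sup>2 * (Hh c)\<^sup>2) (?m p)))"
    proof (intro sum_mono)
      fix p assume "p \<in> S"
      obtain a b where p: "p = (a,b)" by force
      have "(x a b)\<^sup>2 \<le> X\<^sup>2" using nx X by (intro power_mono) auto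
      then have "(F a)\<^sup>2 * (Hh (a+b))\<^sup>2 * (x a b)\<^sup>2 \<le> (F a)\<^sup>2 * (Hh (a+b))\<^sup>2 * X\<^sup>2"
        by (intro mult_left_mono) auto
      then show "(u p)\<^sup>2 \<le> X\<^sup>2 * ((\<lambda>(a,c). (F a)\<^sup>2 * (Hh c)\<^sup>2) (?m p))"
        by (simp add: p u_def power_mult_distrib mult_ac)
    qed
    also have "\<dots> = X\<^sup>2 * (\<Sum>q\<in>?m ` S. (\<lambda>(a,c). (F a)\<^sup>2 * (Hh c)\<^sup>2) q)"
      by (simp add: sum_distrib_left sum.reindex[OF inj])
    also have "(\<Sum>q\<in>?m ` S. (\<lambda>(a,c). (F a)\<^sup>2 * (Hh c)\<^sup>2) q)
        \<le> (\<Sum>q\<in>fst ` (?m ` S) \<times> snd ` (?m ` S). (\<lambda>(a,c). (F a)\<^sup>2 * (Hh c)\<^sup>2) q)"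
      using S by (intro sum_mono2) (auto simp: subset_fst_snd split: prod.splits)
    also have "\<dots> = (\<Sum>a\<in>fst ` (?m ` S). (F a)\<^sup>2) * (\<Sum>c\<in>snd ` (?m ` S). (Hh c)\<^sup>2)"
      by (simp add: sum_product sum.cartesian_product)
    also have "\<dots> \<le> IF * IH"
      unfolding IF_def IH_def using S
      by (intro mult_mono fin_le_inf sF sH finite_imageI) (auto intro!: sum_nonneg infsum_nonneg)
    finally have "(\<Sum>p\<in>S. (u p)\<^sup>2) \<le> X\<^sup>2 * (IF * IH)"
      by (simp add: mult_left_mono)
    then show ?thesis unfolding L2_set_def by simp
  qed
  have hw: "L2_set w S \<le> sqrt (Y * IG)"
  proof -
    have "(\<Sum>p\<in>S. (w p)\<^sup>2) \<le> (\<Sum>p\<in>fst ` S \<times> snd ` S. (w p)\<^sup>2)"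
      using S by (intro sum_mono2) (auto simp: subset_fst_snd split: prod.splits)
    also have "\<dots> = (\<Sum>a\<in>fst ` S. \<Sum>b\<in>snd ` S. (G b)\<^sup>2 * (y a b)\<^sup>2)"
      unfolding sum.cartesian_product w_def by (intro sum.cong) (auto simp: power_mult_distrib)
    also have "\<dots> = (\<Sum>b\<in>snd ` S. (G b)\<^sup>2 * (\<Sum>a\<in>fst ` S. (y a b)\<^sup>2))"
      by (subst sum.swap) (simp add: sum_distrib_left)
    also have "\<dots> \<le> (\<Sum>b\<in>snd ` S. (G b)\<^sup>2 * Y)"
      using S by (intro sum_mono mult_left_mono Y) auto
    also have "\<dots> = Y * (\<Sum>b\<in>snd ` S. (G b)\<^sup>2)" by (simp add: sum_distrib_left mult.commute)
    also have "\<dots> \<le> Y * IG"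
      unfolding IG_def using S Y0 by (intro mult_left_mono fin_le_inf sG) auto
    finally show ?thesis unfolding L2_set_def by simp
  qed
  have "(\<Sum>(a,b)\<in>S. F a * G b * Hh (a+b) * x a b * y a b) \<le> sqrt (X\<^sup>2 * (IF * IH)) * sqrt (Y * IG)"
    using h1 mult_mono[OF hu hw] IF0 IH0 by (simp add: L2_set_nonneg)
  also have "\<dots> = X * sqrt Y * sqrt IF * sqrt IG * sqrt IH"
    using X0 by (simp add: real_sqrt_mult mult_ac)
  finally show ?thesis unfolding IF_def IG_def IH_def .
qed

lemma W0_bound:
  fixes j l :: "int^3"
  assumes jl: "j \<noteq> 0" "l \<noteq> 0" and s1: "1 \<le> s" and q: "q1 + q2 = s - 1"
  shows "knorm j powr (-\<gamma>) * knorm l powr (1-s) * knorm (j+l) powr (s-1)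
    \<le> 2 powr (s-1) * ((if knorm j \<le> knorm l then knorm j powr (-\<gamma>) else 0)
        + (if knorm l < knorm j then knorm l powr (-q1) * (knorm j powr (-(\<gamma> - (s-1))) * knorm l powr (-q2)) else 0))"
proof -
  have pj: "0 < knorm j" "0 < knorm l" using jl knorm_pos by auto
  have kt: "knorm (j+l) \<le> knorm j + knorm l" by (rule knorm_triangle)
  show ?thesis
  proof (cases "knorm j \<le> knorm l")
    case True
    have "knorm (j+l) powr (s-1) \<le> (2 * knorm l) powr (s-1)"
      using True kt s1 by (intro powr_mono2) (auto simp: knorm_nonneg)
    also have "\<dots> = 2 powr (s-1) * knorm l powr (s-1)" by (simp add: powr_mult)
    finally have "knorm j powr (-\<gamma>) * knorm l powr (1-s) * knorm (j+l) powr (s-1)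
        \<le> knorm j powr (-\<gamma>) * knorm l powr (1-s) * (2 powr (s-1) * knorm l powr (s-1))"
      by (intro mult_left_mono) auto
    also have "\<dots> = 2 powr (s-1) * knorm j powr (-\<gamma>) * (knorm l powr (1-s) * knorm l powr (s-1))"
      by (simp add: mult_ac)
    also have "knorm l powr (1-s) * knorm l powr (s-1) = 1"
      using pj by (simp add: powr_add[symmetric])
    finally show ?thesis using True by simp
  next
    case False
    have "knorm (j+l) powr (s-1) \<le> (2 * knorm j) powr (s-1)"
      using False kt s1 by (intro powr_mono2) (auto simp: knorm_nonneg)
    also have "\<dots> = 2 powr (s-1) * knorm j powr (s-1)" by (simp add: powr_mult)
    finally have "knorm j powr (-\<gamma>) * knorm l powr (1-s) * knorm (j+l) powr (s-1)
        \<le> knorm j powr (-\<gamma>) * knorm l powr (1-s) * (2 powr (s-1) * knorm j powr (s-1))"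
      by (intro mult_left_mono) auto
    also have "\<dots> = 2 powr (s-1) * (knorm j powr (-\<gamma>) * knorm j powr (s-1)) * knorm l powr (1-s)"
      by (simp add: mult_ac)
    also have "knorm j powr (-\<gamma>) * knorm j powr (s-1) = knorm j powr (-(\<gamma> - (s-1)))"
      by (simp add: powr_add[symmetric])
    finally have fin: "knorm j powr (-\<gamma>) * knorm l powr (1-s) * knorm (j+l) powr (s-1)
       \<le> 2 powr (s-1) * knorm j powr (-(\<gamma> - (s-1))) * knorm l powr (1-s)" .
    have lq: "knorm l powr (1-s) = knorm l powr (-q1) * knorm l powr (-q2)"
    proof -
      have "1 - s = -q1 + -q2" using q by simp
      then show ?thesis by (simp only: powr_add)
    qed
    show ?thesis using False fin unfolding lq by (simp add: mult_ac)
  qed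
qed

lemma core:
  fixes \<beta> r :: real
  assumes h: "1/2 < \<beta>" "\<beta> < 5/4" "r > max (2*\<beta>) (\<beta>+1)"
  shows "\<exists>C0>0. \<forall>V T P (S::((int^3) \<times> (int^3)) set). (\<forall>a. 0 \<le> V a) \<longrightarrow> (\<forall>a. 0 \<le> T a) \<longrightarrow> (\<forall>a. 0 \<le> P a) \<longrightarrow>
     (\<lambda>a. (V a)\<^sup>2) summable_on UNIV \<longrightarrow> (\<lambda>a. (T a)\<^sup>2) summable_on UNIV \<longrightarrow> (\<lambda>a. (P a)\<^sup>2) summable_on UNIV \<longrightarrow> finite S \<longrightarrow>
     (\<Sum>(j,l)\<in>S. V j * T l * P (j+l) * (knorm j powr (-(r + 3/2 - 2*\<beta>)) * knorm l powr (1-(r-\<beta>)) * knorm (j+l) powr ((r-\<beta>)-1)))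
       \<le> C0 * sqrt (\<Sum>\<^sub>\<infinity>a. (V a)\<^sup>2) * sqrt (\<Sum>\<^sub>\<infinity>a. (T a)\<^sup>2) * sqrt (\<Sum>\<^sub>\<infinity>a. (P a)\<^sup>2)"
proof -
  define \<gamma> where "\<gamma> = r + 3/2 - 2*\<beta>"
  define s where "s = r - \<beta>"
  define q2 where "q2 = max 0 (\<beta> - 1)"
  define q1 where "q1 = s - 1 - q2"
  define p2 where "p2 = \<gamma> - (s-1)"
  have s1: "1 \<le> s" using h by (simp add: s_def)
  have q1: "0 \<le> q1" using h by (simp add: q1_def q2_def s_def)
  have q2: "0 \<le> q2" "q2 < 3/2" using h by (auto simp: q2_def max_def)
  have p2q2: "3 - 2*q2 - 2*p2 \<le> 0" using h by (auto simp: q2_def p2_def \<gamma>_def s_def max_def)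
  have g3: "3 < 2*\<gamma>" using h by (simp add: \<gamma>_def)
  obtain YA where YA: "\<And>A. finite A \<Longrightarrow> (\<Sum>l\<in>A. if l \<noteq> 0 then knorm l powr (-(2*\<gamma>)) else 0) \<le> YA"
    using lattA[OF g3] by blast
  obtain K where K: "\<And>R A. 1 \<le> R \<Longrightarrow> finite A \<Longrightarrow>
     (\<Sum>l\<in>A. if l \<noteq> 0 \<and> knorm l < R then knorm l powr (-(2*q2)) else 0) \<le> K * R powr (3-2*q2)"
    using lattB[OF q2] by blast
  have YA0: "0 \<le> YA" using YA[of "{}"] by simp
  have K0: "0 \<le> K" using K[of 1 "{}"] by simp
  define C0 where "C0 = 2 powr (s-1) * (sqrt YA + sqrt K + 1)"
  have C0: "0 < C0" unfolding C0_def using YA0 K0 by (intro mult_pos_pos) (auto simp: add_nonneg_pos)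
  show ?thesis
  proof (intro exI[of _ C0] conjI allI impI C0)
    fix V T P :: "int^3 \<Rightarrow> real" and S :: "((int^3) \<times> (int^3)) set"
    assume nV: "\<forall>a. 0 \<le> V a" and nT: "\<forall>a. 0 \<le> T a" and nP: "\<forall>a. 0 \<le> P a"
      and sV: "(\<lambda>a. (V a)\<^sup>2) summable_on UNIV" and sT: "(\<lambda>a. (T a)\<^sup>2) summable_on UNIV"
      and sP: "(\<lambda>a. (P a)\<^sup>2) summable_on UNIV" and S: "finite S"
    define nv where "nv = sqrt (\<Sum>\<^sub>\<infinity>a. (V a)\<^sup>2)"
    define nt where "nt = sqrt (\<Sum>\<^sub>\<infinity>a. (T a)\<^sup>2)"
    define np where "np = sqrt (\<Sum>\<^sub>\<infinity>a. (P a)\<^sup>2)"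
    have nn: "0 \<le> nv" "0 \<le> nt" "0 \<le> np" unfolding nv_def nt_def np_def
      by (auto intro!: infsum_nonneg)
    define W1 where "W1 = (\<lambda>j l::int^3. if j \<noteq> 0 \<and> l \<noteq> 0 \<and> knorm j \<le> knorm l then knorm j powr (-\<gamma>) else 0)"
    define xx where "xx = (\<lambda>a b::int^3. if a \<noteq> 0 then knorm a powr (-q1) else 0)"
    define yy where "yy = (\<lambda>a b::int^3. if a \<noteq> 0 \<and> knorm a < knorm b then knorm b powr (-p2) * knorm a powr (-q2) else 0)"
    define w where "w = (\<lambda>j l::int^3. knorm j powr (-(r + 3/2 - 2*\<beta>)) * knorm l powr (1-(r-\<beta>)) * knorm (j+l) powr ((r-\<beta>)-1))"
    have W1n: "0 \<le> W1 j l" for j l by (simp add: W1_def)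
    have xxn: "0 \<le> xx a b" for a b by (simp add: xx_def)
    have yyn: "0 \<le> yy a b" for a b by (simp add: yy_def)
    have wle: "w j l \<le> 2 powr (s-1) * (W1 j l + xx l j * yy l j)" for j l
    proof (cases "j = 0 \<or> l = 0")
      case True
      then have "w j l = 0" by (auto simp: w_def)
      then show ?thesis using W1n xxn yyn by simp
    next
      case False
      have "w j l \<le> 2 powr (s-1) * ((if knorm j \<le> knorm l then knorm j powr (-\<gamma>) else 0)
        + (if knorm l < knorm j then knorm l powr (-q1) * (knorm j powr (-(\<gamma> - (s-1))) * knorm l powr (-q2)) else 0))"
      proof -
        have "w j l = knorm j powr (-\<gamma>) * knorm l powr (1-s) * knorm (j+l) powr (s-1)"
          by (simp add: w_def \<gamma>_def s_def)
        then show ?thesis using False s1 by (simp only:) (rule W0_bound, auto simp: q1_def)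
      qed
      also have "\<dots> = 2 powr (s-1) * (W1 j l + xx l j * yy l j)"
        using False by (simp add: W1_def xx_def yy_def p2_def)
      finally show ?thesis .
    qed
    have "(\<Sum>(j,l)\<in>S. V j * T l * P (j+l) * w j l)
        \<le> (\<Sum>(j,l)\<in>S. V j * T l * P (j+l) * (2 powr (s-1) * (W1 j l + xx l j * yy l j)))"
      using nV nT nP wle by (intro sum_mono) (auto intro!: mult_left_mono)
    also have "\<dots> = 2 powr (s-1) * ((\<Sum>(j,l)\<in>S. V j * T l * P (j+l) * 1 * W1 j l)
        + (\<Sum>(j,l)\<in>S. V j * T l * P (j+l) * xx l j * yy l j))"
      by (simp add: sum_distrib_left sum.distrib[symmetric] case_prod_beta algebra_simps)
    also have "(\<Sum>(j,l)\<in>S. V j * T l * P (j+l) * 1 * W1 j l) \<le> 1 * sqrt YA * nv * nt * np"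
      unfolding nv_def nt_def np_def
    proof (rule schur[OF S])
      fix b and A :: "(int^3) set" assume A: "finite A"
      have "(\<Sum>a\<in>A. (W1 a b)\<^sup>2) \<le> (\<Sum>a\<in>A. if a \<noteq> 0 then knorm a powr (-(2*\<gamma>)) else 0)"
      proof (intro sum_mono)
        fix a
        have "(knorm a powr (-\<gamma>))\<^sup>2 = knorm a powr (-(2*\<gamma>))"
          by (simp add: power2_eq_square powr_add[symmetric])
        then show "(W1 a b)\<^sup>2 \<le> (if a \<noteq> 0 then knorm a powr (-(2*\<gamma>)) else 0)"
          by (simp add: W1_def)
      qed
      also have "\<dots> \<le> YA" using YA A .
      finally show "(\<Sum>a\<in>A. (W1 a b)\<^sup>2) \<le> YA" .
    qed (use nV nT nP sV sT sP W1n in auto)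
    also have "(\<Sum>(j,l)\<in>S. V j * T l * P (j+l) * xx l j * yy l j)
        = (\<Sum>(a,b)\<in>prod.swap ` S. T a * V b * P (a+b) * xx a b * yy a b)"
      by (subst sum.reindex) (auto simp: case_prod_beta add.commute mult_ac intro!: sum.cong)
    also have "\<dots> \<le> 1 * sqrt K * nt * nv * np"
      unfolding nv_def nt_def np_def
    proof (rule schur)
      fix b and A :: "(int^3) set" assume A: "finite A"
      show "(\<Sum>a\<in>A. (yy a b)\<^sup>2) \<le> K"
      proof (cases "b = 0")
        case True
        then show ?thesis using K0 by (simp add: yy_def knorm_nonneg not_less)
      next
        case False
        have b1: "1 \<le> knorm b" using knorm_ge1[OF False] .
        have "(\<Sum>a\<in>A. (yy a b)\<^sup>2)
           = knorm b powr (-(2*p2)) * (\<Sum>a\<in>A. if a \<noteq> 0 \<and> knorm a < knorm b then knorm a powr (-(2*q2)) else 0)"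
          unfolding sum_distrib_left
        proof (intro sum.cong refl)
          fix a
          have "(knorm b powr (-p2) * knorm a powr (-q2))\<^sup>2 = knorm b powr (-(2*p2)) * knorm a powr (-(2*q2))"
            by (simp add: power2_eq_square powr_add[symmetric] mult_ac)
          then show "(yy a b)\<^sup>2 = knorm b powr (-(2*p2)) * (if a \<noteq> 0 \<and> knorm a < knorm b then knorm a powr (-(2*q2)) else 0)"
            by (simp add: yy_def)
        qed
        also have "\<dots> \<le> knorm b powr (-(2*p2)) * (K * knorm b powr (3-2*q2))"
          using K[OF b1 A] by (intro mult_left_mono) auto
        also have "\<dots> = K * knorm b powr (3 - 2*q2 - 2*p2)"
          by (simp add: powr_add[symmetric] mult_ac)
        also have "\<dots> \<le> K * 1"
        proof (intro mult_left_mono K0)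
          have "knorm b powr (3 - 2*q2 - 2*p2) \<le> knorm b powr 0"
            using b1 p2q2 by (intro powr_mono) auto
          then show "knorm b powr (3 - 2*q2 - 2*p2) \<le> 1" using b1 by simp
        qed
        finally show ?thesis by simp
      qed
    next
      fix a b :: "int^3"
      show "xx a b \<le> 1"
      proof (cases "a = 0")
        case False
        have "knorm a powr (-q1) \<le> knorm a powr 0"
          using knorm_ge1[OF False] q1 by (intro powr_mono) auto
        then show ?thesis using False knorm_ge1[OF False] by (simp add: xx_def)
      qed (simp add: xx_def)
    qed (use S nV nT nP sV sT sP xxn yyn in auto)
    finally have "(\<Sum>(j,l)\<in>S. V j * T l * P (j+l) * w j l)
        \<le> 2 powr (s-1) * (1 * sqrt YA * nv * nt * np + 1 * sqrt K * nt * nv * np)"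
      by simp
    also have "\<dots> \<le> C0 * nv * nt * np"
    proof -
      have "1 * sqrt YA * nv * nt * np + 1 * sqrt K * nt * nv * np \<le> (sqrt YA + sqrt K + 1) * (nv * nt * np)"
        using nn by (simp add: algebra_simps)
      then show ?thesis unfolding C0_def by (simp add: mult_ac)
    qed
    finally show "(\<Sum>(j,l)\<in>S. V j * T l * P (j+l) * (knorm j powr (-(r + 3/2 - 2*\<beta>)) * knorm l powr (1-(r-\<beta>)) * knorm (j+l) powr ((r-\<beta>)-1)))
       \<le> C0 * sqrt (\<Sum>\<^sub>\<infinity>a. (V a)\<^sup>2) * sqrt (\<Sum>\<^sub>\<infinity>a. (T a)\<^sup>2) * sqrt (\<Sum>\<^sub>\<infinity>a. (P a)\<^sup>2)"
      unfolding w_def nv_def nt_def np_def .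
  qed
qed

lemma sq_powr: "(x powr e)\<^sup>2 = x powr (2*e)" for x e :: real
proof -
  have "2*e = e + e" by simp
  then show ?thesis by (simp only: power2_eq_square powr_add)
qed

lemma dot_bound:
  fixes u :: "complex^3" and m :: "int^3" and z :: complex and c :: real
  assumes "0 \<le> c"
  shows "cmod (\<Sum>i\<in>UNIV. (c *\<^sub>R u) $ i * (\<i> * of_int (m$i) * z)) \<le> c * norm u * knorm m * cmod z"
proof -
  have "cmod (\<Sum>i\<in>UNIV. (c *\<^sub>R u) $ i * (\<i> * of_int (m$i) * z))
      \<le> (\<Sum>i\<in>UNIV. cmod ((c *\<^sub>R u) $ i * (\<i> * of_int (m$i) * z)))"
    by (rule norm_sum)
  also have "\<dots> = c * cmod z * (\<Sum>i\<in>UNIV. \<bar>cmod (u$i)\<bar> * \<bar>real_of_int (m$i)\<bar>)"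
    using assms by (simp add: sum_distrib_left norm_mult mult_ac vector_scaleR_component)
  also have "\<dots> \<le> c * cmod z * (L2_set (\<lambda>i. cmod (u$i)) UNIV * L2_set (\<lambda>i. real_of_int (m$i)) UNIV)"
    using assms by (intro mult_left_mono L2_set_mult_ineq) auto
  also have "L2_set (\<lambda>i. cmod (u$i)) UNIV = norm u" by (simp add: norm_vec_def)
  also have "L2_set (\<lambda>i. real_of_int (m$i)) UNIV = knorm m" by (simp add: knorm_def L2_set_def)
  finally show ?thesis by (simp add: mult_ac)
qed

theorem lemma15:
  fixes \<alpha> \<beta> r :: real
  assumes "1/2 < \<beta>" and "\<beta> < 5/4" and "\<alpha> + \<beta> = 5/4"
    and "r > max (2 * \<beta>) (\<beta> + 1)"
  shows "\<exists>C>0. \<forall>v \<theta> \<phi>. Vs (r - 1) v \<longrightarrow> Hs (r - \<beta>) \<theta> \<longrightarrow> Hs (r - \<beta> - 1) \<phi> \<longrightarrow>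
    cmod (l2pair (dotgrad (LambdaV (-2 * \<alpha>) v) \<theta>) (Lambda (2 * r - 2 * \<beta> - 2) \<phi>))
      \<le> C * Vnorm (r - 1) v * Hnorm (r - \<beta>) \<theta> * Hnorm (r - \<beta> - 1) \<phi>"
proof -
  obtain C0 where C0: "C0 > 0" and core0: "\<And>V T P (S::((int^3) \<times> (int^3)) set). (\<forall>a. 0 \<le> V a) \<Longrightarrow> (\<forall>a. 0 \<le> T a) \<Longrightarrow> (\<forall>a. 0 \<le> P a) \<Longrightarrow>
     (\<lambda>a. (V a)\<^sup>2) summable_on UNIV \<Longrightarrow> (\<lambda>a. (T a)\<^sup>2) summable_on UNIV \<Longrightarrow> (\<lambda>a. (P a)\<^sup>2) summable_on UNIV \<Longrightarrow> finite S \<Longrightarrow>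
     (\<Sum>(j,l)\<in>S. V j * T l * P (j+l) * (knorm j powr (-(r + 3/2 - 2*\<beta>)) * knorm l powr (1-(r-\<beta>)) * knorm (j+l) powr ((r-\<beta>)-1)))
       \<le> C0 * sqrt (\<Sum>\<^sub>\<infinity>a. (V a)\<^sup>2) * sqrt (\<Sum>\<^sub>\<infinity>a. (T a)\<^sup>2) * sqrt (\<Sum>\<^sub>\<infinity>a. (P a)\<^sup>2)"
    using core[OF assms(1,2,4)] by blast
  define C where "C = (2*pi)^3 * C0"
  have Cpos: "C > 0" unfolding C_def using C0 by simp
  show ?thesis
  proof (intro exI[of _ C] conjI allI impI Cpos)
    fix v \<theta> \<phi>
    assume hv: "Vs (r - 1) v" and ht: "Hs (r - \<beta>) \<theta>" and hp: "Hs (r - \<beta> - 1) \<phi>"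
    define V where "V = (\<lambda>j. knorm j powr (r-1) * norm (v j))"
    define T where "T = (\<lambda>l. knorm l powr (r-\<beta>) * cmod (\<theta> l))"
    define P where "P = (\<lambda>k. knorm k powr (r-\<beta>-1) * cmod (\<phi> k))"
    have nV: "\<forall>a. 0 \<le> V a" and nT: "\<forall>a. 0 \<le> T a" and nP: "\<forall>a. 0 \<le> P a"
      by (auto simp: V_def T_def P_def)
    have V2: "(V a)\<^sup>2 = (norm (v a))\<^sup>2 * knorm a powr (2 * (r-1))" for a
      by (simp add: V_def power_mult_distrib sq_powr mult_ac)
    have T2: "(T a)\<^sup>2 = (cmod (\<theta> a))\<^sup>2 * knorm a powr (2 * (r-\<beta>))" for a
      by (simp add: T_def power_mult_distrib sq_powr mult_ac)
    have P2: "(P a)\<^sup>2 = (cmod (\<phi> a))\<^sup>2 * knorm a powr (2 * (r-\<beta>-1))" for a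
      by (simp add: P_def power_mult_distrib sq_powr mult_ac)
    have sV: "(\<lambda>a. (V a)\<^sup>2) summable_on UNIV" using hv unfolding Vs_def V2 by simp
    have sT: "(\<lambda>a. (T a)\<^sup>2) summable_on UNIV" using ht unfolding Hs_def T2 by simp
    have sP: "(\<lambda>a. (P a)\<^sup>2) summable_on UNIV" using hp unfolding Hs_def P2 by simp
    have eV: "Vnorm (r-1) v = sqrt (\<Sum>\<^sub>\<infinity>a. (V a)\<^sup>2)" unfolding Vnorm_def V2 ..
    have eT: "Hnorm (r-\<beta>) \<theta> = sqrt (\<Sum>\<^sub>\<infinity>a. (T a)\<^sup>2)" unfolding Hnorm_def T2 ..
    have eP: "Hnorm (r-\<beta>-1) \<phi> = sqrt (\<Sum>\<^sub>\<infinity>a. (P a)\<^sup>2)" unfolding Hnorm_def P2 ..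
    define B where "B = C0 * Vnorm (r-1) v * Hnorm (r-\<beta>) \<theta> * Hnorm (r-\<beta>-1) \<phi>"
    define w where "w = (\<lambda>j l::int^3. knorm j powr (-(r + 3/2 - 2*\<beta>)) * knorm l powr (1-(r-\<beta>)) * knorm (j+l) powr ((r-\<beta>)-1))"
    define cc where "cc = (\<lambda>j. knorm j powr (-2 * \<alpha>))"
    define Pk where "Pk = (\<lambda>k. knorm k powr (2 * r - 2 * \<beta> - 2) * cmod (\<phi> k))"
    define D' where "D' = (\<lambda>k j. cc j * norm (v j) * knorm (k-j) * cmod (\<theta> (k-j)))"
    define E where "E = (\<lambda>(k,j). D' k j * Pk k)"
    have Dn: "0 \<le> D' k j" for k j by (simp add: D'_def cc_def knorm_nonneg)
    have Pkn: "0 \<le> Pk k" for k by (simp add: Pk_def)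
    have En: "0 \<le> E p" for p using Dn Pkn by (auto simp: E_def split: prod.splits)
    have Eeq: "E (k,j) = V j * T (k-j) * P (j + (k-j)) * w j (k-j)" for k j
    proof -
      have e1: "cc j = knorm j powr (r-1) * knorm j powr (-(r + 3/2 - 2*\<beta>))"
      proof -
        have "-2 * \<alpha> = (r-1) + (-(r + 3/2 - 2*\<beta>))" using assms(3) by simp
        then show ?thesis unfolding cc_def by (simp only: powr_add)
      qed
      have e2: "knorm (k-j) = knorm (k-j) powr (r-\<beta>) * knorm (k-j) powr (1-(r-\<beta>))"
        unfolding powr_add[symmetric] by (simp add: knorm_nonneg powr_one)
      have e3: "knorm k powr (2 * r - 2 * \<beta> - 2) = knorm k powr (r-\<beta>-1) * knorm k powr ((r-\<beta>)-1)"
        unfolding powr_add[symmetric] by (simp add: algebra_simps)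
      have jk: "j + (k - j) = k" by simp
      have "V j * T (k-j) * P (j + (k-j)) * w j (k-j)
        = (knorm j powr (r-1) * knorm j powr (-(r + 3/2 - 2*\<beta>)))
          * (knorm (k-j) powr (r-\<beta>) * knorm (k-j) powr (1-(r-\<beta>)))
          * (knorm k powr (r-\<beta>-1) * knorm k powr ((r-\<beta>)-1))
          * (norm (v j) * cmod (\<theta> (k-j)) * cmod (\<phi> k))"
        unfolding V_def T_def P_def w_def jk by (simp only: mult_ac)
      also have "\<dots> = cc j * knorm (k-j) * knorm k powr (2 * r - 2 * \<beta> - 2)
          * (norm (v j) * cmod (\<theta> (k-j)) * cmod (\<phi> k))"
        by (simp only: e1[symmetric] e2[symmetric] e3[symmetric])
      also have "\<dots> = E (k,j)"
        unfolding E_def D'_def Pk_def by (simp only: mult_ac prod.case)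
      finally show ?thesis by simp
    qed
    have finE: "sum E F \<le> B" if F: "finite F" for F
    proof -
      let ?m = "\<lambda>(k,j). (j, k - j)"
      have inj: "inj_on ?m F" by (auto simp: inj_on_def)
      have "sum E F = (\<Sum>(j,l)\<in>?m ` F. V j * T l * P (j+l) * w j l)"
        by (subst sum.reindex[OF inj]) (auto simp: Eeq intro!: sum.cong)
      also have "\<dots> \<le> B"
        unfolding B_def eV eT eP w_def using F
        by (intro core0 nV nT nP sV sT sP finite_imageI)
      finally show ?thesis .
    qed
    have sE: "E summable_on UNIV"
      by (rule nonneg_bdd_above_summable_on) (use En finE in \<open>auto intro!: bdd_aboveI2\<close>)
    have iE: "infsum E UNIV \<le> B" by (rule infsum_le_finite_sums[OF sE finE]) 
    have sE': "(\<lambda>(k,j). E (k,j)) summable_on (UNIV \<times> UNIV)" using sE by simp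
    have sEk: "(\<lambda>j. E (k,j)) summable_on UNIV" for k
      using summable_on_SigmaD1[of "\<lambda>k j. E (k,j)" UNIV "\<lambda>_. UNIV" k] sE by simp
    define e where "e = (\<lambda>k. \<Sum>\<^sub>\<infinity>j. E (k,j))"
    have en: "0 \<le> e k" for k unfolding e_def using En by (intro infsum_nonneg) auto
    have se: "e summable_on UNIV"
      unfolding e_def using summable_on_SigmaD[of E UNIV "\<lambda>_. UNIV"] sE sEk by simp
    have ie: "infsum e UNIV \<le> B"
      unfolding e_def using infsum_Sigma_banach[of E UNIV "\<lambda>_. UNIV"] sE iE by simp
    define F where "F = (\<lambda>k. dotgrad (LambdaV (-2 * \<alpha>) v) \<theta> k * cnj (Lambda (2 * r - 2 * \<beta> - 2) \<phi> k))"
    have Fle: "cmod (F k) \<le> e k" for k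
    proof (cases "Pk k = 0")
      case True
      then have "F k = 0" unfolding F_def Pk_def Lambda_def by auto
      then show ?thesis using en by simp
    next
      case False
      then have Pp: "0 < Pk k" using Pkn[of k] by simp
      have sD: "(\<lambda>j. D' k j) summable_on UNIV"
      proof -
        have "(\<lambda>j. E (k,j) * (1 / Pk k)) summable_on UNIV" by (rule summable_on_cmult_left[OF sEk])
        then show ?thesis using Pp by (simp add: E_def)
      qed
      define Dc where "Dc = (\<lambda>j. \<Sum>i\<in>UNIV. LambdaV (-2 * \<alpha>) v j $ i * grad \<theta> (k - j) $ i)"
      have Dcb: "cmod (Dc j) \<le> D' k j" for j
      proof -
        have "Dc j = (\<Sum>i\<in>UNIV. (cc j *\<^sub>R v j) $ i * (\<i> * of_int ((k-j)$i) * \<theta> (k-j)))"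
          unfolding Dc_def LambdaV_def grad_def cc_def by simp
        also have "cmod \<dots> \<le> cc j * norm (v j) * knorm (k-j) * cmod (\<theta> (k-j))"
          by (rule dot_bound) (simp add: cc_def)
        finally show ?thesis unfolding D'_def .
      qed
      have aD: "(\<lambda>x. norm (Dc x)) summable_on UNIV"
        by (rule summable_on_comparison_test[OF sD]) (use Dcb in auto)
      have "cmod (dotgrad (LambdaV (-2 * \<alpha>) v) \<theta> k) = cmod (infsum Dc UNIV)"
        unfolding dotgrad_def Dc_def ..
      also have "\<dots> \<le> (\<Sum>\<^sub>\<infinity>j. cmod (Dc j))" by (rule norm_infsum_bound[OF aD])
      also have "\<dots> \<le> (\<Sum>\<^sub>\<infinity>j. D' k j)" by (rule infsum_mono) (use aD sD Dcb in auto)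
      finally have h: "cmod (dotgrad (LambdaV (-2 * \<alpha>) v) \<theta> k) \<le> (\<Sum>\<^sub>\<infinity>j. D' k j)" .
      have "cmod (F k) = cmod (dotgrad (LambdaV (-2 * \<alpha>) v) \<theta> k) * Pk k"
        unfolding F_def Pk_def Lambda_def by (simp add: norm_mult)
      also have "\<dots> \<le> (\<Sum>\<^sub>\<infinity>j. D' k j) * Pk k" using h Pkn by (intro mult_right_mono) auto
      also have "\<dots> = e k" unfolding e_def E_def by (simp add: infsum_cmult_left')
      finally show ?thesis .
    qed
    have aF: "(\<lambda>x. norm (F x)) summable_on UNIV"
      by (rule summable_on_comparison_test[OF se]) (use Fle in auto)
    have "cmod (infsum F UNIV) \<le> (\<Sum>\<^sub>\<infinity>k. cmod (F k))" by (rule norm_infsum_bound[OF aF])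
    also have "\<dots> \<le> infsum e UNIV" by (rule infsum_mono) (use aF se Fle in auto)
    also have "\<dots> \<le> B" by (rule ie)
    finally have "cmod (infsum F UNIV) \<le> B" .
    then have "cmod (l2pair (dotgrad (LambdaV (-2 * \<alpha>) v) \<theta>) (Lambda (2 * r - 2 * \<beta> - 2) \<phi>)) \<le> (2*pi)^3 * B"
    proof -
      have "cmod (complex_of_real ((2 * pi) ^ 3)) = (2*pi)^3" by (simp only: norm_of_real) simp
      moreover have "(2*pi)^3 * cmod (infsum F UNIV) \<le> (2*pi)^3 * B"
        using \<open>cmod (infsum F UNIV) \<le> B\<close> by (intro mult_left_mono) auto
      ultimately show ?thesis unfolding l2pair_def F_def norm_mult by simp
    qed
    then show "cmod (l2pair (dotgrad (LambdaV (-2 * \<alpha>) v) \<theta>) (Lambda (2 * r - 2 * \<beta> - 2) \<phi>))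
      \<le> C * Vnorm (r - 1) v * Hnorm (r - \<beta>) \<theta> * Hnorm (r - \<beta> - 1) \<phi>"
      unfolding B_def C_def by (simp add: mult_ac)
  qed
qed

end
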